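(* Let $n=n^{(p)}$ with $n/p\to\delta\in(0,\infty)$, let $\boldsymbol{g}\sim\mathcal{N}(\mathbf 0,\boldsymbol I_n)$ and $\boldsymbol{h}\sim\mathcal{N}(\mathbf 0,\boldsymbol I_p)$, and let $\{\boldsymbol w^{(p)}\}$, $\boldsymbol w^{(p)}\in\mathbb{R}^n$, be a converging sequence with $\frac1n\|\boldsymbol w\|^2\to\sigma_w^2$. Let $\boldsymbol\beta\in\mathbb{R}^p$ and $0\le\lambda_1\le\cdots\le\lambda_p$, $J_{\boldsymbol\lambda}(\boldsymbol x)=\sum_i\lambda_i|x|_{(i)}$. For $\boldsymbol v\in\mathbb{R}^p$ define \[ L(\boldsymbol v)=\frac12\Big(\sqrt{\tfrac{\|\boldsymbol v\|^2}{n}\tfrac{\|\boldsymbol g\|^2}{n}+\tfrac{\|\boldsymbol w\|^2}{n}+2\tfrac{\|\boldsymbol v\|}{\sqrt n}\tfrac{\boldsymbol g^\top\boldsymbol w}{n}}-\tfrac{\boldsymbol h^\top\boldsymbol v}{n}\Big)_+^2+\frac{J_{\boldsymbol\lambda}(\boldsymbol v+\boldsymbol\beta)}{n}, \] \[ \widetilde L(\boldsymbol v)=\frac12\Big(\sqrt{\tfrac{\|\boldsymbol v\|^2}{n}+\sigma_w^2}-\tfrac{\boldsymbol h^\top\boldsymbol v}{n}\Big)_+^2+\frac{J_{\boldsymbol\lambda}(\boldsymbol v+\boldsymbol\beta)}{n}, \] and for $K>0$ let $\mathcal S_{\boldsymbol v}(K)=\{\boldsymbol v:\|\boldsymbol v\|_2/\sqrt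 n\le K\}$. Then for every $\epsilon\in(0,1/2)$, \[ \sup_{\boldsymbol v\in\mathcal S_{\boldsymbol v}(K)}|L(\boldsymbol v)-\widetilde L(\boldsymbol v)|<c\epsilon \] with probability $1-\delta^{(p)}$, where $\delta^{(p)}\to0$ as $p\to\infty$ and $c>0$ is a constant not depending on $p$.
   Context: $(x)_+=\max\{0,x\}$. $|x|_{(1)}\le\cdots\le|x|_{(p)}$ denotes the increasing rearrangement of the absolute values of the entries of $\boldsymbol x$. A converging sequence is a sequence of vectors whose empirical measure converges weakly to a probability measure. *)

theory Defs
  imports "HOL-Probability.Probability"
begin

text \<open>Vectors of R^m are represented as functions nat => real, only indices i < m matter.\<close>

definition vnorm :: "nat \<Rightarrow> (nat \<Rightarrow> real) \<Rightarrow> real" where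
  "vnorm m v = sqrt (\<Sum>i<m. (v i)^2)"

definition vinner :: "nat \<Rightarrow> (nat \<Rightarrow> real) \<Rightarrow> (nat \<Rightarrow> real) \<Rightarrow> real" where
  "vinner m u v = (\<Sum>i<m. u i * v i)"

definition pos_part :: "real \<Rightarrow> real" where
  "pos_part x = max 0 x"

text \<open>Increasing rearrangement of the absolute values of the entries of x in R^m
  (0-based: entry k is |x|_(k+1)).\<close>
definition sorted_abs :: "nat \<Rightarrow> (nat \<Rightarrow> real) \<Rightarrow> real list" where
  "sorted_abs m x = sort (map (\<lambda>i. \<bar>x i\<bar>) [0..<m])"

definition J_lam :: "nat \<Rightarrow> (nat \<Rightarrow> real) \<Rightarrow> (nat \<Rightarrow> real) \<Rightarrow> real" where
  "J_lam m lam x = (\<Sum>i<m. lam i * (sorted_abs m x ! i))"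

definition empirical_measure :: "nat \<Rightarrow> (nat \<Rightarrow> real) \<Rightarrow> real measure" where
  "empirical_measure m w = distr (uniform_count_measure {..<m}) borel w"

definition converging_sequence :: "(nat \<Rightarrow> nat) \<Rightarrow> (nat \<Rightarrow> nat \<Rightarrow> real) \<Rightarrow> bool" where
  "converging_sequence n w \<longleftrightarrow>
     (\<exists>\<mu>. prob_space \<mu> \<and> sets \<mu> = sets borel \<and>
          weak_conv_m (\<lambda>p. empirical_measure (n p) (w p)) \<mu>)"

definition std_gaussian_vector :: "'a measure \<Rightarrow> nat \<Rightarrow> ('a \<Rightarrow> nat \<Rightarrow> real) \<Rightarrow> bool" where
  "std_gaussian_vector M m X \<longleftrightarrow>
     (\<forall>i<m. distributed M lborel (\<lambda>\<omega>. X \<omega> i) std_normal_density) \<and>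
     prob_space.indep_vars M (\<lambda>_. borel) (\<lambda>i \<omega>. X \<omega> i) {..<m}"

definition L_fun :: "nat \<Rightarrow> nat \<Rightarrow> (nat \<Rightarrow> real) \<Rightarrow> (nat \<Rightarrow> real) \<Rightarrow> (nat \<Rightarrow> real)
    \<Rightarrow> (nat \<Rightarrow> real) \<Rightarrow> (nat \<Rightarrow> real) \<Rightarrow> (nat \<Rightarrow> real) \<Rightarrow> real" where
  "L_fun n p g h w beta lam v =
     (1/2) * (pos_part (sqrt ((vnorm p v)^2 / n * ((vnorm n g)^2 / n) + (vnorm n w)^2 / n
              + 2 * (vnorm p v / sqrt n) * (vinner n g w / n)) - vinner p h v / n))^2
     + J_lam p lam (\<lambda>i. v i + beta i) / n"

definition L_tilde :: "nat \<Rightarrow> nat \<Rightarrow> real \<Rightarrow> (nat \<Rightarrow> real) \<Rightarrow> (nat \<Rightarrow> real)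
    \<Rightarrow> (nat \<Rightarrow> real) \<Rightarrow> (nat \<Rightarrow> real) \<Rightarrow> real" where
  "L_tilde n p sw2 h beta lam v =
     (1/2) * (pos_part (sqrt ((vnorm p v)^2 / n + sw2) - vinner p h v / n))^2
     + J_lam p lam (\<lambda>i. v i + beta i) / n"

definition S_v :: "nat \<Rightarrow> nat \<Rightarrow> real \<Rightarrow> (nat \<Rightarrow> real) set" where
  "S_v n p K = {v. (\<forall>i\<ge>p. v i = 0) \<and> vnorm p v / sqrt n \<le> K}"

end

theory Submission
  imports Defs
begin


lemma (in prob_space) gauss_mom:
  assumes D: "distributed M lborel X std_normal_density"
  shows "integrable M (\<lambda>x. X x ^ k) \<and> expectation (\<lambda>x. X x ^ k) = (\<integral>x. std_normal_density x * x ^ k \<partial>lborel)"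
proof
  show "integrable M (\<lambda>x. X x ^ k)"
    using distributed_integrable[OF D, of "\<lambda>x. x ^ k"] integrable_std_normal_moment[of k] by simp
  show "expectation (\<lambda>x. X x ^ k) = (\<integral>x. std_normal_density x * x ^ k \<partial>lborel)"
    using distributed_integral[OF D, of "\<lambda>x. x ^ k"] by simp
qed

lemma (in prob_space) gauss_facts:
  assumes D: "distributed M lborel X std_normal_density"
  shows "integrable M X" "integrable M (\<lambda>x. (X x)^2)" "integrable M (\<lambda>x. (X x)^4)"
    "expectation X = 0" "expectation (\<lambda>x. (X x)^2) = 1" "expectation (\<lambda>x. (X x)^4) = 3"
proof -
  show "integrable M X" using gauss_mom[OF D, of 1] by simp
  show "integrable M (\<lambda>x. (X x)^2)" using gauss_mom[OF D, of 2] by simp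
  show "integrable M (\<lambda>x. (X x)^4)" using gauss_mom[OF D, of 4] by simp
  show "expectation X = 0" using gauss_mom[OF D, of 1] integral_std_normal_moment_odd[of 0] by simp
  show "expectation (\<lambda>x. (X x)^2) = 1" using gauss_mom[OF D, of 2] integral_std_normal_moment_even[of 1] by simp
  have "expectation (\<lambda>x. (X x)^4) = fact (2 * 2) / (2^2 * fact 2)"
    using gauss_mom[OF D, of 4] integral_std_normal_moment_even[of 2] by simp
  also have "\<dots> = 3" by (simp add: fact_numeral)
  finally show "expectation (\<lambda>x. (X x)^4) = 3" .
qed

lemma (in prob_space) second_moment_sum:
  fixes Y :: "nat \<Rightarrow> 'a \<Rightarrow> real"
  assumes fin: "finite I" and ind: "indep_vars (\<lambda>_. borel) Y I"
    and sq: "\<And>i. i \<in> I \<Longrightarrow> integrable M (\<lambda>x. (Y i x)^2)"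
    and z: "\<And>i. i \<in> I \<Longrightarrow> expectation (Y i) = 0"
  shows "integrable M (\<lambda>x. (\<Sum>i\<in>I. Y i x)^2)"
    "expectation (\<lambda>x. (\<Sum>i\<in>I. Y i x)^2) = (\<Sum>i\<in>I. expectation (\<lambda>x. (Y i x)^2))"
proof -
  have rv: "\<And>i. i \<in> I \<Longrightarrow> Y i \<in> borel_measurable M"
    using ind unfolding indep_vars_def by auto
  have int1: "\<And>i. i \<in> I \<Longrightarrow> integrable M (Y i)"
    using sq rv square_integrable_imp_integrable by blast
  have pair: "integrable M (\<lambda>x. Y i x * Y j x) \<and>
     expectation (\<lambda>x. Y i x * Y j x) = (if i = j then expectation (\<lambda>x. (Y i x)^2) else 0)"
    if ij: "i \<in> I" "j \<in> I" for i j
  proof (cases "i = j")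
    case True then show ?thesis using sq[OF ij(1)] by (simp add: power2_eq_square)
  next
    case False
    have ind2: "indep_vars (\<lambda>_. borel) Y {i, j}"
      using indep_vars_subset[OF ind] ij by auto
    have "integrable M (\<lambda>x. \<Prod>k\<in>{i,j}. Y k x)"
      by (rule indep_vars_integrable[OF _ ind2]) (use int1 ij in auto)
    moreover have "expectation (\<lambda>x. \<Prod>k\<in>{i,j}. Y k x) = (\<Prod>k\<in>{i,j}. expectation (Y k))"
      by (rule indep_vars_lebesgue_integral[OF _ ind2]) (use int1 ij in auto)
    ultimately show ?thesis using False z ij by simp
  qed
  have eq: "(\<lambda>x. (\<Sum>i\<in>I. Y i x)^2) = (\<lambda>x. \<Sum>i\<in>I. \<Sum>j\<in>I. Y i x * Y j x)"
    by (simp add: power2_eq_square sum_product)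
  show "integrable M (\<lambda>x. (\<Sum>i\<in>I. Y i x)^2)"
    unfolding eq using pair by (intro Bochner_Integration.integrable_sum) auto
  have "expectation (\<lambda>x. (\<Sum>i\<in>I. Y i x)^2) = (\<Sum>i\<in>I. \<Sum>j\<in>I. expectation (\<lambda>x. Y i x * Y j x))"
    unfolding eq using pair
    by (simp add: Bochner_Integration.integral_sum Bochner_Integration.integrable_sum)
  also have "\<dots> = (\<Sum>i\<in>I. \<Sum>j\<in>I. (if i = j then expectation (\<lambda>x. (Y i x)^2) else 0))"
    using pair by (intro sum.cong refl) auto
  also have "\<dots> = (\<Sum>i\<in>I. expectation (\<lambda>x. (Y i x)^2))"
    using fin by (simp add: sum.delta)
  finally show "expectation (\<lambda>x. (\<Sum>i\<in>I. Y i x)^2) = (\<Sum>i\<in>I. expectation (\<lambda>x. (Y i x)^2))" .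
qed

lemma (in prob_space) cheb_sum:
  fixes Y :: "nat \<Rightarrow> 'a \<Rightarrow> real"
  assumes fin: "finite I" and ind: "indep_vars (\<lambda>_. borel) Y I"
    and sq: "\<And>i. i \<in> I \<Longrightarrow> integrable M (\<lambda>x. (Y i x)^2)"
    and z: "\<And>i. i \<in> I \<Longrightarrow> expectation (Y i) = 0"
    and a: "a > 0"
  shows "prob {x\<in>space M. a \<le> \<bar>\<Sum>i\<in>I. Y i x\<bar>} \<le> (\<Sum>i\<in>I. expectation (\<lambda>x. (Y i x)^2)) / a^2"
proof -
  have rv: "\<And>i. i \<in> I \<Longrightarrow> Y i \<in> borel_measurable M"
    using ind unfolding indep_vars_def by auto
  have int1: "\<And>i. i \<in> I \<Longrightarrow> integrable M (Y i)"
    using sq rv square_integrable_imp_integrable by blast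
  have rvS: "random_variable borel (\<lambda>x. \<Sum>i\<in>I. Y i x)"
    using rv by (intro borel_measurable_sum) auto
  have E0: "expectation (\<lambda>x. \<Sum>i\<in>I. Y i x) = 0"
    using int1 z by (simp add: Bochner_Integration.integral_sum)
  note C = Chebyshev_inequality[OF rvS second_moment_sum(1)[OF fin ind sq z] a]
  show ?thesis using C E0 second_moment_sum(2)[OF fin ind sq z] by simp
qed

lemma (in prob_space) gv_norm:
  assumes G: "std_gaussian_vector M m X" and a: "a > 0"
  shows "prob {x\<in>space M. a \<le> \<bar>(\<Sum>i<m. (X x i)^2) - real m\<bar>} \<le> 2 * real m / a^2"
proof -
  have D: "\<And>i. i < m \<Longrightarrow> distributed M lborel (\<lambda>x. X x i) std_normal_density"
    and ind0: "indep_vars (\<lambda>_. borel) (\<lambda>i x. X x i) {..<m}"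
    using G unfolding std_gaussian_vector_def by auto
  define Y where "Y i x = (X x i)^2 - 1" for i x
  have ind: "indep_vars (\<lambda>_. borel) Y {..<m}"
    unfolding Y_def by (rule indep_vars_compose2[OF ind0, where Y="\<lambda>i z. z^2 - 1"]) auto
  have sq: "integrable M (\<lambda>x. (Y i x)^2) \<and> expectation (\<lambda>x. (Y i x)^2) = 2" if "i < m" for i
  proof -
    note F = gauss_facts[OF D[OF that]]
    have e: "(\<lambda>x. (Y i x)^2) = (\<lambda>x. (X x i)^4 - 2 * (X x i)^2 + 1)"
      unfolding Y_def by (auto simp: power2_eq_square power4_eq_xxxx algebra_simps)
    show ?thesis unfolding e using F by (simp add: prob_space)
  qed
  have z: "expectation (Y i) = 0" if "i < m" for i
  proof -
    note F = gauss_facts[OF D[OF that]]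
    show ?thesis unfolding Y_def using F by (simp add: prob_space)
  qed
  have "prob {x\<in>space M. a \<le> \<bar>\<Sum>i<m. Y i x\<bar>} \<le> (\<Sum>i<m. expectation (\<lambda>x. (Y i x)^2)) / a^2"
    by (rule cheb_sum[OF _ ind _ _ a]) (use sq z in auto)
  moreover have "(\<Sum>i<m. expectation (\<lambda>x. (Y i x)^2)) = 2 * real m"
    using sq by simp
  moreover have "(\<Sum>i<m. Y i x) = (\<Sum>i<m. (X x i)^2) - real m" for x
    unfolding Y_def by (simp add: sum_subtractf)
  ultimately show ?thesis by simp
qed

lemma (in prob_space) gv_lin:
  assumes G: "std_gaussian_vector M m X" and a: "a > 0"
  shows "prob {x\<in>space M. a \<le> \<bar>\<Sum>i<m. X x i * w i\<bar>} \<le> (\<Sum>i<m. (w i)^2) / a^2"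
proof -
  have D: "\<And>i. i < m \<Longrightarrow> distributed M lborel (\<lambda>x. X x i) std_normal_density"
    and ind0: "indep_vars (\<lambda>_. borel) (\<lambda>i x. X x i) {..<m}"
    using G unfolding std_gaussian_vector_def by auto
  define Y where "Y i x = X x i * w i" for i x
  have ind: "indep_vars (\<lambda>_. borel) Y {..<m}"
    unfolding Y_def by (rule indep_vars_compose2[OF ind0, where Y="\<lambda>i z. z * w i"]) auto
  have sq: "integrable M (\<lambda>x. (Y i x)^2) \<and> expectation (\<lambda>x. (Y i x)^2) = (w i)^2" if "i < m" for i
  proof -
    note F = gauss_facts[OF D[OF that]]
    have e: "(\<lambda>x. (Y i x)^2) = (\<lambda>x. (w i)^2 * (X x i)^2)"
      unfolding Y_def by (auto simp: power2_eq_square algebra_simps)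
    show ?thesis unfolding e using F by simp
  qed
  have z: "expectation (Y i) = 0" if "i < m" for i
  proof -
    note F = gauss_facts[OF D[OF that]]
    show ?thesis unfolding Y_def using F by simp
  qed
  have "prob {x\<in>space M. a \<le> \<bar>\<Sum>i<m. Y i x\<bar>} \<le> (\<Sum>i<m. expectation (\<lambda>x. (Y i x)^2)) / a^2"
    by (rule cheb_sum[OF _ ind _ _ a]) (use sq z in auto)
  moreover have "(\<Sum>i<m. expectation (\<lambda>x. (Y i x)^2)) = (\<Sum>i<m. (w i)^2)"
    using sq by simp
  ultimately show ?thesis unfolding Y_def by simp
qed



lemma sqrt_diff_le: fixes x y :: real assumes "0 \<le> y"
  shows "\<bar>sqrt x - sqrt y\<bar> \<le> 2 * sqrt \<bar>x - y\<bar>"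
proof (cases "x \<ge> 0")
  case True
  have key: "\<And>a b::real. 0 \<le> b \<Longrightarrow> b \<le> a \<Longrightarrow> sqrt a - sqrt b \<le> sqrt (a - b)"
  proof -
    fix a b :: real assume h: "0 \<le> b" "b \<le> a"
    have "sqrt a \<le> sqrt b + sqrt (a - b)"
    proof (rule real_le_lsqrt)
      show "0 \<le> sqrt b + sqrt (a - b)" using h by simp
      have "(sqrt b + sqrt (a - b))^2 = b + (a - b) + 2 * sqrt b * sqrt (a - b)"
        using h by (simp add: power2_sum)
      moreover have "0 \<le> sqrt b * sqrt (a - b)" using h by simp
      ultimately show "a \<le> (sqrt b + sqrt (a - b))^2" by simp
    qed
    then show "sqrt a - sqrt b \<le> sqrt (a - b)" by simp
  qed
  show ?thesis
  proof (cases "y \<le> x")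
    case True
    then have "\<bar>sqrt x - sqrt y\<bar> = sqrt x - sqrt y" by simp
    also have "\<dots> \<le> sqrt \<bar>x - y\<bar>" using key[of y x] True assms by simp
    finally show ?thesis using real_sqrt_ge_zero[of "\<bar>x - y\<bar>"] by linarith
  next
    case False
    then have "\<bar>sqrt x - sqrt y\<bar> = sqrt y - sqrt x" by simp
    also have "\<dots> \<le> sqrt \<bar>x - y\<bar>" using key[of x y] False \<open>x \<ge> 0\<close> by (simp add: abs_minus_commute)
    finally show ?thesis using real_sqrt_ge_zero[of "\<bar>x - y\<bar>"] by linarith
  qed
next
  case False
  have "sqrt x = - sqrt (- x)" by (simp add: real_sqrt_minus)
  then have "\<bar>sqrt x - sqrt y\<bar> = sqrt (-x) + sqrt y"
    using assms False real_sqrt_ge_zero[of "-x"] real_sqrt_ge_zero[of y] by linarith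
  also have "\<dots> \<le> sqrt \<bar>x - y\<bar> + sqrt \<bar>x - y\<bar>"
    using False assms by (intro add_mono real_sqrt_le_mono) auto
  finally show ?thesis by simp
qed

lemma pos_part_lip: "\<bar>pos_part a - pos_part b\<bar> \<le> \<bar>a - b\<bar>"
  unfolding pos_part_def by auto

lemma det_bound:
  fixes u a b s \<sigma>2 q Q t K :: real
  assumes u: "0 \<le> u" "u \<le> K" and ha: "\<bar>a - 1\<bar> \<le> t" and hb: "\<bar>b\<bar> \<le> t"
    and hs: "\<bar>s - \<sigma>2\<bar> \<le> t" and s2: "0 \<le> \<sigma>2" and hq: "\<bar>q\<bar> \<le> Q" and t: "0 \<le> t"
  defines "\<eta> \<equiv> (K^2 + 1 + 2 * K) * t"
  shows "\<bar>(1/2) * (pos_part (sqrt (u^2 * a + s + 2 * u * b) - q))^2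
          - (1/2) * (pos_part (sqrt (u^2 + \<sigma>2) - q))^2\<bar>
         \<le> 2 * sqrt \<eta> * (sqrt (K^2 + \<sigma>2) + Q + sqrt \<eta>)"
proof -
  define A where "A = u^2 * a + s + 2 * u * b"
  define B where "B = u^2 + \<sigma>2"
  have "\<bar>A - B\<bar> = \<bar>u^2 * (a - 1) + (s - \<sigma>2) + 2 * u * b\<bar>"
    unfolding A_def B_def by (simp add: algebra_simps)
  also have "\<dots> \<le> u^2 * \<bar>a - 1\<bar> + \<bar>s - \<sigma>2\<bar> + 2 * u * \<bar>b\<bar>"
    using u by (simp add: abs_mult abs_triangle_ineq order_trans[OF abs_triangle_ineq])
  also have "\<dots> \<le> K^2 * t + t + 2 * K * t"
    using u ha hb hs t
    by (intro add_mono mult_mono power_mono) auto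
  finally have AB: "\<bar>A - B\<bar> \<le> \<eta>" unfolding \<eta>_def by (simp add: algebra_simps)
  have eta0: "0 \<le> \<eta>" unfolding \<eta>_def using t u by simp
  define D where "D = 2 * sqrt \<eta>"
  have "\<bar>sqrt A - sqrt B\<bar> \<le> 2 * sqrt \<bar>A - B\<bar>"
    by (rule sqrt_diff_le) (simp add: B_def s2)
  also have "\<dots> \<le> D" unfolding D_def using AB by simp
  finally have sAB: "\<bar>sqrt A - sqrt B\<bar> \<le> D" .
  define P1 where "P1 = pos_part (sqrt A - q)"
  define P2 where "P2 = pos_part (sqrt B - q)"
  have P12: "\<bar>P1 - P2\<bar> \<le> D"
    unfolding P1_def P2_def using pos_part_lip[of "sqrt A - q" "sqrt B - q"] sAB by simp
  have P1n: "0 \<le> P1" "0 \<le> P2" unfolding P1_def P2_def pos_part_def by auto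
  have "sqrt B \<le> sqrt (K^2 + \<sigma>2)" unfolding B_def using u by (intro real_sqrt_le_mono add_mono power_mono) auto
  then have "sqrt B - q \<le> sqrt (K^2 + \<sigma>2) + Q" using hq by linarith
  moreover have "0 \<le> sqrt (K^2 + \<sigma>2) + Q" using hq s2 by (smt (verit) real_sqrt_ge_zero zero_le_power2)
  ultimately have P2le: "P2 \<le> sqrt (K^2 + \<sigma>2) + Q" unfolding P2_def pos_part_def by auto
  have "(1/2) * P1^2 - (1/2) * P2^2 = (1/2) * ((P1 - P2) * (P1 + P2))"
    by (simp add: power2_eq_square algebra_simps)
  then have "\<bar>(1/2) * P1^2 - (1/2) * P2^2\<bar> = (1/2) * (\<bar>P1 - P2\<bar> * \<bar>P1 + P2\<bar>)"
    by (simp only: abs_mult)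
  then have "\<bar>(1/2) * P1^2 - (1/2) * P2^2\<bar> = (1/2) * (\<bar>P1 - P2\<bar> * (P1 + P2))"
    using P1n by simp
  also have "\<dots> \<le> (1/2) * (D * (2 * (sqrt (K^2 + \<sigma>2) + Q) + D))"
    using P12 P2le P1n by (intro mult_left_mono mult_mono) auto
  also have "\<dots> = 2 * sqrt \<eta> * (sqrt (K^2 + \<sigma>2) + Q + sqrt \<eta>)"
    unfolding D_def by (simp add: algebra_simps)
  finally show ?thesis unfolding P1_def P2_def A_def B_def .
qed



lemma vnorm_sq: "(vnorm m v)^2 = (\<Sum>i<m. (v i)^2)"
  unfolding vnorm_def by (simp add: sum_nonneg)

lemma vinner_cs: "\<bar>vinner m h v\<bar> \<le> sqrt (\<Sum>i<m. (h i)^2) * vnorm m v"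
proof -
  have "(vinner m h v)^2 \<le> (\<Sum>i<m. (h i)^2) * (\<Sum>i<m. (v i)^2)"
    unfolding vinner_def by (rule Cauchy_Schwarz_ineq_sum)
  then have "sqrt ((vinner m h v)^2) \<le> sqrt ((\<Sum>i<m. (h i)^2) * (\<Sum>i<m. (v i)^2))"
    by (rule real_sqrt_le_mono)
  then show ?thesis unfolding vnorm_def by (simp add: real_sqrt_mult)
qed

lemma pw:
  fixes n p :: nat and g h w beta lam v :: "nat \<Rightarrow> real" and t \<sigma>2 \<delta> K :: real
  assumes n: "n > 0" and hG: "\<bar>(\<Sum>i<n. (g i)^2) - real n\<bar> \<le> real n * t"
    and hT: "\<bar>\<Sum>i<n. g i * w i\<bar> \<le> real n * t"
    and hs: "\<bar>(vnorm n w)^2 / n - \<sigma>2\<bar> \<le> t" and s2: "0 \<le> \<sigma>2"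
    and hH: "(\<Sum>i<p. (h i)^2) \<le> 2 * real p" and pn: "real p / real n \<le> 2 / \<delta>"
    and d: "\<delta> > 0" and t: "0 \<le> t" and v: "v \<in> S_v n p K" and K: "K > 0"
  shows "\<bar>L_fun n p g h w beta lam v - L_tilde n p \<sigma>2 h beta lam v\<bar>
     \<le> 2 * sqrt ((K^2 + 1 + 2 * K) * t) * (sqrt (K^2 + \<sigma>2) + K * sqrt (4 / \<delta>) + sqrt ((K^2 + 1 + 2 * K) * t))"
proof -
  define u where "u = vnorm p v / sqrt n"
  define a where "a = (\<Sum>i<n. (g i)^2) / n"
  define b where "b = vinner n g w / n"
  define q where "q = vinner p h v / n"
  have vn0: "0 \<le> vnorm p v" unfolding vnorm_def by (simp add: sum_nonneg)
  have u0: "0 \<le> u" unfolding u_def using vn0 by simp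
  have uK: "u \<le> K" using v unfolding S_v_def u_def by simp
  have u2: "u^2 = (vnorm p v)^2 / n" unfolding u_def by (simp add: power_divide)
  have ha: "\<bar>a - 1\<bar> \<le> t"
  proof -
    have "a - 1 = ((\<Sum>i<n. (g i)^2) - real n) / n" unfolding a_def using n by (simp add: field_simps)
    then have "\<bar>a - 1\<bar> = \<bar>(\<Sum>i<n. (g i)^2) - real n\<bar> / n" by simp
    also have "\<dots> \<le> real n * t / n" using hG n by (intro divide_right_mono) auto
    finally show ?thesis using n by simp
  qed
  have hb: "\<bar>b\<bar> \<le> t"
  proof -
    have "\<bar>b\<bar> = \<bar>\<Sum>i<n. g i * w i\<bar> / n" unfolding b_def vinner_def by simp
    also have "\<dots> \<le> real n * t / n" using hT n by (intro divide_right_mono) auto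
    finally show ?thesis using n by simp
  qed
  have hq: "\<bar>q\<bar> \<le> K * sqrt (4 / \<delta>)"
  proof -
    have "\<bar>q\<bar> = \<bar>vinner p h v\<bar> / n" unfolding q_def by simp
    also have "\<dots> \<le> sqrt (\<Sum>i<p. (h i)^2) * vnorm p v / n"
      using vinner_cs[of p h v] n by (intro divide_right_mono) auto
    also have "\<dots> = sqrt ((\<Sum>i<p. (h i)^2) / n) * u"
      unfolding u_def using n by (simp add: real_sqrt_divide field_simps)
    also have "\<dots> \<le> sqrt (4 / \<delta>) * K"
    proof (intro mult_mono real_sqrt_le_mono)
      have "(\<Sum>i<p. (h i)^2) / n \<le> 2 * real p / n" using hH n by (intro divide_right_mono) auto
      also have "\<dots> = 2 * (real p / n)" by simp
      also have "\<dots> \<le> 2 * (2 / \<delta>)" using pn by simp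
      finally show "(\<Sum>i<p. (h i)^2) / n \<le> 4 / \<delta>" by simp
    qed (use uK u0 d in auto)
    finally show ?thesis by (simp add: mult.commute)
  qed
  have e1: "L_fun n p g h w beta lam v - L_tilde n p \<sigma>2 h beta lam v =
     (1/2) * (pos_part (sqrt (u^2 * a + (vnorm n w)^2 / n + 2 * u * b) - q))^2
     - (1/2) * (pos_part (sqrt (u^2 + \<sigma>2) - q))^2"
    unfolding L_fun_def L_tilde_def u2 a_def b_def q_def vnorm_sq[of n g]
    by (simp add: u_def)
  show ?thesis unfolding e1
    by (rule det_bound[OF u0 uK ha hb hs s2 hq t])
qed



theorem lemma22:
  fixes M :: "nat \<Rightarrow> 'a measure"
    and n :: "nat \<Rightarrow> nat"
    and \<delta> :: real and \<sigma>w :: real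
    and g h :: "nat \<Rightarrow> 'a \<Rightarrow> nat \<Rightarrow> real"
    and w beta lam :: "nat \<Rightarrow> nat \<Rightarrow> real"
    and K :: real
  assumes "\<delta> > 0"
    and "(\<lambda>p. real (n p) / real p) \<longlonglongrightarrow> \<delta>"
    and "\<And>p. prob_space (M p)"
    and "\<And>p. std_gaussian_vector (M p) (n p) (g p)"
    and "\<And>p. std_gaussian_vector (M p) p (h p)"
    and "converging_sequence n w"
    and "(\<lambda>p. (vnorm (n p) (w p))^2 / real (n p)) \<longlonglongrightarrow> \<sigma>w^2"
    and "\<And>p i j. i \<le> j \<Longrightarrow> j < p \<Longrightarrow> 0 \<le> lam p i \<and> lam p i \<le> lam p j"
    and "K > 0"
  shows "\<exists>c>0. \<forall>\<epsilon>. 0 < \<epsilon> \<and> \<epsilon> < 1/2 \<longrightarrow>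
           (\<exists>d :: nat \<Rightarrow> real. d \<longlonglongrightarrow> 0 \<and>
              (\<forall>p. \<exists>A \<in> sets (M p). measure (M p) A \<ge> 1 - d p \<and>
                 (\<forall>\<omega>\<in>A. (SUP v\<in>S_v (n p) p K.
                     \<bar>L_fun (n p) p (g p \<omega>) (h p \<omega>) (w p) (beta p) (lam p) v
                      - L_tilde (n p) p (\<sigma>w^2) (h p \<omega>) (beta p) (lam p) v\<bar>) < c * \<epsilon>)))"
proof (intro exI[of _ 1] conjI allI impI)
  show "(0::real) < 1" by simp
  fix \<epsilon> :: real assume eps: "0 < \<epsilon> \<and> \<epsilon> < 1/2"
  have d0: "\<delta> > 0" and K0: "K > 0" using assms by auto
  define s where "s p = (vnorm (n p) (w p))^2 / real (n p)" for p
  define Q0 where "Q0 = K * sqrt (4 / \<delta>)"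
  define R0 where "R0 = sqrt (K^2 + \<sigma>w^2) + Q0"
  define r where "r = min 1 (\<epsilon> / (2 * (R0 + 1) + 1))"
  define C where "C = K^2 + 1 + 2 * K"
  define t where "t = r^2 / C"
  have R0: "0 \<le> R0" unfolding R0_def Q0_def using d0 K0 by simp
  have r0: "0 < r" "r \<le> 1" unfolding r_def using eps R0 by auto
  have C0: "C > 0" unfolding C_def using K0 by (simp add: add_pos_nonneg)
  have t0: "t > 0" unfolding t_def using r0 C0 by simp
  have Ct: "sqrt (C * t) = r" unfolding t_def using C0 r0 by simp
  have bound: "2 * r * (R0 + r) < \<epsilon>"
  proof -
    have "2 * r * (R0 + r) \<le> r * (2 * (R0 + 1))" using r0 R0 by (simp add: algebra_simps)
    also have "\<dots> \<le> \<epsilon> / (2 * (R0 + 1) + 1) * (2 * (R0 + 1))"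
      using R0 r_def by (intro mult_right_mono) auto
    also have "\<dots> < \<epsilon>" using eps R0 by (simp add: field_simps)
    finally show ?thesis .
  qed
  have ev1: "eventually (\<lambda>p. real (n p) / real p > \<delta> / 2) sequentially"
    using order_tendstoD(1)[OF assms(2), of "\<delta> / 2"] d0 by simp
  have ev2: "eventually (\<lambda>p. \<bar>s p - \<sigma>w^2\<bar> < t) sequentially"
    using tendstoD[OF assms(7) t0] unfolding s_def dist_real_def by simp
  have ev3: "eventually (\<lambda>p. p > 0) sequentially" by (rule eventually_gt_at_top)
  obtain N where N: "\<And>p. p \<ge> N \<Longrightarrow> real (n p) / real p > \<delta> / 2 \<and> \<bar>s p - \<sigma>w^2\<bar> < t \<and> p > 0"
    using eventually_conj[OF ev1 eventually_conj[OF ev2 ev3]] unfolding eventually_sequentially by blast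
  have Np: "n p > 0 \<and> real p / real (n p) \<le> 2 / \<delta>" if "p \<ge> N" for p
  proof -
    have a: "real (n p) / real p > \<delta> / 2" and p0: "p > 0" using N[OF that] by auto
    then have q0: "real (n p) / real p > 0" using d0 by linarith
    then have "real (n p) > 0" using p0 by (simp add: zero_less_divide_iff)
    moreover have "real p / real (n p) = 1 / (real (n p) / real p)" by simp
    moreover have "1 / (real (n p) / real p) \<le> 1 / (\<delta> / 2)"
    proof (rule divide_left_mono)
      show "0 < real (n p) / real p * (\<delta> / 2)" using q0 d0 by (intro mult_pos_pos) auto
    qed (use a in auto)
    ultimately show ?thesis by simp
  qed
  define d where "d p = (if p < N then 1 else 2 / (real (n p) * t^2) + s p / (real (n p) * t^2) + 2 / real p)" for p
  show "\<exists>d :: nat \<Rightarrow> real. d \<longlonglongrightarrow> 0 \<and>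
              (\<forall>p. \<exists>A \<in> sets (M p). measure (M p) A \<ge> 1 - d p \<and>
                 (\<forall>\<omega>\<in>A. (SUP v\<in>S_v (n p) p K.
                     \<bar>L_fun (n p) p (g p \<omega>) (h p \<omega>) (w p) (beta p) (lam p) v
                      - L_tilde (n p) p (\<sigma>w^2) (h p \<omega>) (beta p) (lam p) v\<bar>) < 1 * \<epsilon>))"
  proof (intro exI[of _ d] conjI allI)
    have pn: "(\<lambda>p. real p / real (n p)) \<longlonglongrightarrow> inverse \<delta>"
      using tendsto_inverse[OF assms(2)] d0 by simp
    have inv: "(\<lambda>p. 1 / real (n p)) \<longlonglongrightarrow> 0"
    proof -
      have "(\<lambda>p. (1 / real p) * (real p / real (n p))) \<longlonglongrightarrow> 0 * inverse \<delta>"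
        by (intro tendsto_mult pn lim_1_over_n)
      then have l: "(\<lambda>p. (1 / real p) * (real p / real (n p))) \<longlonglongrightarrow> 0" by simp
      have "\<forall>\<^sub>F p in sequentially. (1 / real p) * (real p / real (n p)) = 1 / real (n p)"
        using eventually_gt_at_top[of 0] by eventually_elim auto
      from Lim_transform_eventually[OF l this] show ?thesis .
    qed
    have sl: "s \<longlonglongrightarrow> \<sigma>w^2" unfolding s_def using assms(7) .
    have "(\<lambda>p. (2 / t^2) * (1 / real (n p)) + s p * (1 / real (n p)) / t^2 + 2 * (1 / real p))
          \<longlonglongrightarrow> (2 / t^2) * 0 + \<sigma>w^2 * 0 / t^2 + 2 * 0"
      using t0 by (intro tendsto_intros inv sl) auto
    then have L: "(\<lambda>p. (2 / t^2) * (1 / real (n p)) + s p * (1 / real (n p)) / t^2 + 2 * (1 / real p))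
          \<longlonglongrightarrow> 0" by simp
    show "d \<longlonglongrightarrow> 0"
    proof (rule Lim_transform_eventually[OF L])
      show "\<forall>\<^sub>F p in sequentially. (2 / t^2) * (1 / real (n p)) + s p * (1 / real (n p)) / t^2 + 2 * (1 / real p) = d p"
        unfolding eventually_sequentially d_def by (intro exI[of _ N]) auto
    qed
  next
    fix p
    interpret P: prob_space "M p" by (rule assms(3))
    show "\<exists>A \<in> sets (M p). measure (M p) A \<ge> 1 - d p \<and>
                 (\<forall>\<omega>\<in>A. (SUP v\<in>S_v (n p) p K.
                     \<bar>L_fun (n p) p (g p \<omega>) (h p \<omega>) (w p) (beta p) (lam p) v
                      - L_tilde (n p) p (\<sigma>w^2) (h p \<omega>) (beta p) (lam p) v\<bar>) < 1 * \<epsilon>)"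
    proof (cases "p < N")
      case True
      then show ?thesis by (intro bexI[of _ "{}"]) (auto simp: d_def)
    next
      case False
      then have pN: "p \<ge> N" by simp
      have n0: "n p > 0" and pnb: "real p / real (n p) \<le> 2 / \<delta>" using Np[OF pN] by auto
      have p0: "p > 0" and sN: "\<bar>s p - \<sigma>w^2\<bar> < t" using N[OF pN] by auto
      define G where "G \<omega> = (\<Sum>i<n p. (g p \<omega> i)^2)" for \<omega>
      define T where "T \<omega> = (\<Sum>i<n p. g p \<omega> i * w p i)" for \<omega>
      define H where "H \<omega> = (\<Sum>i<p. (h p \<omega> i)^2)" for \<omega>
      have mg: "(\<lambda>\<omega>. g p \<omega> i) \<in> borel_measurable (M p)" if "i < n p" for i
        using assms(4)[of p] that distributed_measurable unfolding std_gaussian_vector_def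
        by fastforce
      have mh: "(\<lambda>\<omega>. h p \<omega> i) \<in> borel_measurable (M p)" if "i < p" for i
        using assms(5)[of p] that distributed_measurable unfolding std_gaussian_vector_def
        by fastforce
      have [measurable]: "G \<in> borel_measurable (M p)" unfolding G_def
        using mg by (intro borel_measurable_sum borel_measurable_power) auto
      have [measurable]: "T \<in> borel_measurable (M p)" unfolding T_def
        using mg by (intro borel_measurable_sum borel_measurable_times) auto
      have [measurable]: "H \<in> borel_measurable (M p)" unfolding H_def
        using mh by (intro borel_measurable_sum borel_measurable_power) auto
      define A where "A = {\<omega>\<in>space (M p). \<bar>G \<omega> - real (n p)\<bar> < real (n p) * t \<and>
          \<bar>T \<omega>\<bar> < real (n p) * t \<and> \<bar>H \<omega> - real p\<bar> < real p}"
      define B1 where "B1 = {\<omega>\<in>space (M p). real (n p) * t \<le> \<bar>G \<omega> - real (n p)\<bar>}"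
      define B2 where "B2 = {\<omega>\<in>space (M p). real (n p) * t \<le> \<bar>T \<omega>\<bar>}"
      define B3 where "B3 = {\<omega>\<in>space (M p). real p \<le> \<bar>H \<omega> - real p\<bar>}"
      have [measurable]: "A \<in> sets (M p)" "B1 \<in> sets (M p)" "B2 \<in> sets (M p)" "B3 \<in> sets (M p)"
        unfolding A_def B1_def B2_def B3_def by measurable
      have nt: "real (n p) * t > 0" using n0 t0 by simp
      have pB1: "P.prob B1 \<le> 2 / (real (n p) * t^2)"
      proof -
        have "P.prob B1 \<le> 2 * real (n p) / (real (n p) * t)^2"
          unfolding B1_def G_def by (rule P.gv_norm[OF assms(4) nt])
        also have "\<dots> = 2 / (real (n p) * t^2)" using n0 by (simp add: power2_eq_square field_simps)
        finally show ?thesis .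
      qed
      have pB2: "P.prob B2 \<le> s p / (real (n p) * t^2)"
      proof -
        have "P.prob B2 \<le> (\<Sum>i<n p. (w p i)^2) / (real (n p) * t)^2"
          unfolding B2_def T_def by (rule P.gv_lin[OF assms(4) nt])
        also have "\<dots> = s p / (real (n p) * t^2)" unfolding s_def vnorm_sq
          using n0 by (simp add: power2_eq_square field_simps)
        finally show ?thesis .
      qed
      have pB3: "P.prob B3 \<le> 2 / real p"
      proof -
        have "P.prob B3 \<le> 2 * real p / (real p)^2"
          unfolding B3_def H_def by (rule P.gv_norm[OF assms(5)]) (use p0 in simp)
        also have "\<dots> = 2 / real p" using p0 by (simp add: power2_eq_square)
        finally show ?thesis .
      qed
      have sub: "space (M p) - A \<subseteq> B1 \<union> B2 \<union> B3"
        unfolding A_def B1_def B2_def B3_def by auto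
      have "P.prob (space (M p) - A) \<le> P.prob (B1 \<union> B2 \<union> B3)"
        using sub by (intro P.finite_measure_mono) auto
      also have "\<dots> \<le> P.prob B1 + P.prob B2 + P.prob B3"
        by (meson add_mono_thms_linordered_semiring(3) dual_order.trans measure_Un_le sets.Un
             \<open>B1 \<in> sets (M p)\<close> \<open>B2 \<in> sets (M p)\<close> \<open>B3 \<in> sets (M p)\<close>)
      finally have "1 - P.prob A \<le> d p"
        using P.prob_compl[OF \<open>A \<in> sets (M p)\<close>] pB1 pB2 pB3 pN by (simp add: d_def)
      then have mA: "measure (M p) A \<ge> 1 - d p" by simp
      show ?thesis
      proof (intro bexI[of _ A] conjI ballI)
        show "A \<in> sets (M p)" by simp
        show "1 - d p \<le> measure (M p) A" by (rule mA)
        fix \<omega> assume \<omega>: "\<omega> \<in> A"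
        have z: "(\<lambda>i. 0) \<in> S_v (n p) p K" unfolding S_v_def vnorm_def using K0 by simp
        have "(SUP v\<in>S_v (n p) p K.
                     \<bar>L_fun (n p) p (g p \<omega>) (h p \<omega>) (w p) (beta p) (lam p) v
                      - L_tilde (n p) p (\<sigma>w^2) (h p \<omega>) (beta p) (lam p) v\<bar>)
              \<le> 2 * sqrt (C * t) * (sqrt (K^2 + \<sigma>w^2) + K * sqrt (4 / \<delta>) + sqrt (C * t))"
        proof (rule cSUP_least)
          show "S_v (n p) p K \<noteq> {}" using z by blast
          fix v assume v: "v \<in> S_v (n p) p K"
          show "\<bar>L_fun (n p) p (g p \<omega>) (h p \<omega>) (w p) (beta p) (lam p) v
                      - L_tilde (n p) p (\<sigma>w^2) (h p \<omega>) (beta p) (lam p) v\<bar>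
              \<le> 2 * sqrt (C * t) * (sqrt (K^2 + \<sigma>w^2) + K * sqrt (4 / \<delta>) + sqrt (C * t))"
            unfolding C_def
          proof (rule pw[OF n0 _ _ _ _ _ pnb d0 _ v K0])
            show "\<bar>(\<Sum>i<n p. (g p \<omega> i)^2) - real (n p)\<bar> \<le> real (n p) * t"
              using \<omega> unfolding A_def G_def by auto
            show "\<bar>\<Sum>i<n p. g p \<omega> i * w p i\<bar> \<le> real (n p) * t"
              using \<omega> unfolding A_def T_def by auto
            show "\<bar>(vnorm (n p) (w p))^2 / real (n p) - \<sigma>w^2\<bar> \<le> t"
              using sN unfolding s_def by simp
            show "(\<Sum>i<p. (h p \<omega> i)^2) \<le> 2 * real p"
              using \<omega> unfolding A_def H_def by auto
          qed (use t0 in auto)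
        qed
        also have "\<dots> = 2 * r * (R0 + r)" unfolding Ct R0_def Q0_def by simp
        also have "\<dots> < 1 * \<epsilon>" using bound by simp
        finally show "(SUP v\<in>S_v (n p) p K.
                     \<bar>L_fun (n p) p (g p \<omega>) (h p \<omega>) (w p) (beta p) (lam p) v
                      - L_tilde (n p) p (\<sigma>w^2) (h p \<omega>) (beta p) (lam p) v\<bar>) < 1 * \<epsilon>" .
      qed
    qed
  qed
qed

end
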